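(* Let $A=A^\top\in\mathbb{R}^{3\times3}$ be positive definite, $u\in\mathbb{S}^2$, and $\gamma>0$. Let $\mathcal{T}(R,\theta)=R\,\mathcal{R}_a(\theta,u)$ and $$U(R,\theta)=\mathrm{tr}\big(A(I_3-\mathcal{T}(R,\theta))\big)+\tfrac{\gamma}{2}\theta^2 .$$ Consider trajectories generated by $\dot R=R\omega^\times$ and $\dot\theta=v$ with $R(0)\in SO(3)$, $\theta(0)\in\mathbb{R}$, $\omega\in\mathbb{R}^3$, $v\in\mathbb{R}$. Then for all $(R,\theta)\in SO(3)\times\mathbb{R}$: 1. $\dot{\mathcal{T}}(R,\theta)=\mathcal{T}(R,\theta)\big(\mathcal{R}_a(\theta,u)^\top\omega+vu\big)^\times$; 2. $\psi(R^\top\nabla_RU(R,\theta))=\mathcal{R}_a(\theta,u)\,\psi(A\mathcal{T}(R,\theta))$; 3. $\nabla_\theta U(R,\theta)=\gamma\theta+2u^\top\psi(A\mathcal{T}(R,\theta))$; 4. the critical set of $U$ is $\Psi_U=\Psi_V\times\{0\}$, and in particular $(I_3,0)\in\Psi_U$; 5. $\tfrac{d}{dt}\psi(R^\top\nabla_RU(R,\theta))=\mathcal{D}_R(R,\theta)\,\omega+\mathcal{D}_\theta(R,\theta)\,v$, where $$\mathcal{D}_R(R,\theta)=\mathcal{R}_a(\theta,u)\,E(A\mathcal{T}(R,\theta))\,\mathcal{R}_a(\theta,u)^\top,$$ $$\mathcal{D}_\theta(R,\theta)=\mathcal{R}_a(\theta,u)\,E(A\mathcal{T}(R,\theta))\,u-\big(\mathcal{R}_a(\theta,u)\,\psi(A\mathcal{T}(R,\theta))\big)^\times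 u,$$ and $E(B)=\tfrac12(\mathrm{tr}(B)I_3-B^\top)$ for $B\in\mathbb{R}^{3\times3}$.
   Context: Notation. - $\mathcal{R}_a(\theta,u)=I_3+\sin\theta\,u^\times+(1-\cos\theta)(u^\times)^2$ is the rotation by angle $\theta$ about the unit axis $u$. - $x^\times$ is the skew-symmetric matrix with $x^\times y=x\times y$. - For $B=[b_{ij}]$, $\psi(B)=\tfrac12[b_{32}-b_{23},b_{13}-b_{31},b_{21}-b_{12}]^\top$. - $\nabla_RU(R,\theta)\in T_RSO(3)=\{R\Omega:\Omega^\top=-\Omega\}$ is the gradient in $R$ with respect to the metric $\langle R\Omega_1,R\Omega_2\rangle_R=\mathrm{tr}(\Omega_1^\top\Omega_2)$, and $\nabla_\theta U$ is the partial derivative in $\theta$. - The critical set is $\Psi_U=\{(R,\theta):\nabla_RU(R,\theta)=0,\ \nabla_\theta U(R,\theta)=0\}$. - $\Psi_V=\{I_3\}\cup\{\mathcal{R}_a(\pi,w):w\in\mathcal{E}(A)\}$, where $\mathcal{E}(A)$ is the set of all unit eigenvectors of $A$. *)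

theory Defs
  imports "HOL-Analysis.Analysis"
begin

type_synonym mat3 = "real^3^3"
type_synonym vec3 = "real^3"

text \<open>Skew-symmetric matrix: skew x *v y = x \<times> y.\<close>
definition skew :: "vec3 \<Rightarrow> mat3" where
  "skew x = vector [vector [0, - x$3, x$2],
                    vector [x$3, 0, - x$1],
                    vector [- x$2, x$1, 0]]"

definition is_skew :: "mat3 \<Rightarrow> bool" where
  "is_skew \<Omega> \<longleftrightarrow> transpose \<Omega> = - \<Omega>"

text \<open>Rotation by angle th about the unit axis u (Rodrigues formula).\<close>
definition Ra :: "real \<Rightarrow> vec3 \<Rightarrow> mat3" where
  "Ra th u = mat 1 + sin th *\<^sub>R skew u + (1 - cos th) *\<^sub>R (skew u ** skew u)"

definition psi :: "mat3 \<Rightarrow> vec3" where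
  "psi B = (1/2) *\<^sub>R vector [B$3$2 - B$2$3, B$1$3 - B$3$1, B$2$1 - B$1$2]"

definition SO3 :: "mat3 set" where
  "SO3 = {R. transpose R ** R = mat 1 \<and> det R = 1}"

definition frob :: "mat3 \<Rightarrow> mat3 \<Rightarrow> real" where
  "frob X Y = trace (transpose X ** Y)"

text \<open>Riemannian gradient on SO(3) w.r.t. the metric <R O1, R O2>_R = tr(O1^T O2):
  the unique tangent vector G = R O_G (O_G skew) such that, for every tangent direction
  R O, the directional derivative of f at R along R O equals <G, R O>_R.\<close>
definition gradR :: "(mat3 \<Rightarrow> real) \<Rightarrow> mat3 \<Rightarrow> mat3" where
  "gradR f R = (THE G. (\<exists>\<Omega>G. is_skew \<Omega>G \<and> G = R ** \<Omega>G) \<and>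
      (\<forall>\<Omega>. is_skew \<Omega> \<longrightarrow>
         ((\<lambda>s. f (R + s *\<^sub>R (R ** \<Omega>))) has_real_derivative
            frob (transpose R ** G) \<Omega>) (at 0)))"

definition Tmap :: "vec3 \<Rightarrow> mat3 \<Rightarrow> real \<Rightarrow> mat3" where
  "Tmap u R th = R ** Ra th u"

definition Upot :: "mat3 \<Rightarrow> real \<Rightarrow> vec3 \<Rightarrow> mat3 \<Rightarrow> real \<Rightarrow> real" where
  "Upot A \<gamma> u R th = trace (A ** (mat 1 - Tmap u R th)) + \<gamma> / 2 * th\<^sup>2"

definition gradTheta :: "mat3 \<Rightarrow> real \<Rightarrow> vec3 \<Rightarrow> mat3 \<Rightarrow> real \<Rightarrow> real" where
  "gradTheta A \<gamma> u R th = deriv (\<lambda>t. Upot A \<gamma> u R t) th"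

definition critU :: "mat3 \<Rightarrow> real \<Rightarrow> vec3 \<Rightarrow> (mat3 \<times> real) set" where
  "critU A \<gamma> u = {(R, th). R \<in> SO3 \<and> gradR (\<lambda>X. Upot A \<gamma> u X th) R = 0
                              \<and> gradTheta A \<gamma> u R th = 0}"

definition unit_eigvecs :: "mat3 \<Rightarrow> vec3 set" where
  "unit_eigvecs A = {w. norm w = 1 \<and> (\<exists>c. A *v w = c *\<^sub>R w)}"

definition critV :: "mat3 \<Rightarrow> mat3 set" where
  "critV A = {mat 1} \<union> {Ra pi w | w. w \<in> unit_eigvecs A}"

definition Emat :: "mat3 \<Rightarrow> mat3" where
  "Emat B = (1/2) *\<^sub>R (trace B *\<^sub>R mat 1 - transpose B)"

definition DR :: "mat3 \<Rightarrow> vec3 \<Rightarrow> mat3 \<Rightarrow> real \<Rightarrow> mat3" where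
  "DR A u R th = Ra th u ** Emat (A ** Tmap u R th) ** transpose (Ra th u)"

definition Dtheta :: "mat3 \<Rightarrow> vec3 \<Rightarrow> mat3 \<Rightarrow> real \<Rightarrow> vec3" where
  "Dtheta A u R th = Ra th u ** Emat (A ** Tmap u R th) *v u
      - skew (Ra th u *v psi (A ** Tmap u R th)) *v u"

end

theory Submission
  imports Defs "HOL-Analysis.Cross3"
begin
unbundle no cross3_syntax
unbundle set_product_syntax

lemma skew_nth: "skew x $ i $ j = (if i = 1 then (if j = 1 then 0 else if j = 2 then - x$3 else x$2)
   else if i = 2 then (if j = 1 then x$3 else if j = 2 then 0 else - x$1)
   else (if j = 1 then - x$2 else if j = 2 then x$1 else 0))"
proof -
  have "i = 1 \<or> i = 2 \<or> i = 3" "j = 1 \<or> j = 2 \<or> j = 3" using exhaust_3 by auto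
  then show ?thesis unfolding skew_def by (auto simp: vector_def)
qed

lemmas crd = vec_eq_iff forall_3 sum_3 matrix_matrix_mult_def matrix_vector_mult_def
  transpose_def mat_def skew_nth psi_def Emat_def trace_def inner_vec_def cross3_def vector_3

lemma skew_mult: "skew x *v y = cross3 x y"
  by (simp add: vec_eq_iff forall_3 matrix_vector_mult_def sum_3 skew_nth cross3_def vector_3)
lemma psi_skew[simp]: "psi (skew x) = x" by (simp add: crd)
lemma psi_add: "psi (B + C) = psi B + psi C" by (simp add: crd algebra_simps)
lemma psi_diff: "psi (B - C) = psi B - psi C" by (simp add: crd algebra_simps)
lemma psi_scale: "psi (c *\<^sub>R B) = c *\<^sub>R psi B" by (simp add: crd algebra_simps)
lemma psi_transpose: "psi (transpose B) = - psi B" by (simp add: crd algebra_simps)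
lemma psi_sym: assumes "transpose B = B" shows "psi B = 0"
proof -
  have h: "B$j$i = B$i$j" for i j
  proof -
    have "transpose B $ i $ j = B $ i $ j" using assms by simp
    then show ?thesis by (simp add: transpose_def)
  qed
  show ?thesis using h[of 1 2] h[of 1 3] h[of 2 3] by (simp add: crd)
qed
lemma psi_zero_sym: "psi B = 0 \<Longrightarrow> transpose B = B" by (simp add: crd algebra_simps) 
lemma skew_add: "skew (x + y) = skew x + skew y" by (simp add: crd)
lemma skew_scale: "skew (c *\<^sub>R x) = c *\<^sub>R skew x" by (simp add: crd)
lemma skew_0[simp]: "skew 0 = 0" by (simp add: crd)
lemma skew_inj: "skew x = skew y \<longleftrightarrow> x = y" by (auto dest: arg_cong[where f=psi])
lemma transpose_skew: "transpose (skew x) = - skew x" by (simp add: crd)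
lemma skew_part: "B - transpose B = 2 *\<^sub>R skew (psi B)" by (simp add: crd field_simps)
lemma is_skew_eq: assumes "is_skew W" shows "W = skew (psi W)"
proof -
  have h: "W$j$i = - W$i$j" for i j
  proof -
    have "transpose W $ i $ j = (- W) $ i $ j" using assms unfolding is_skew_def by simp
    then show ?thesis by (simp add: transpose_def)
  qed
  have d: "W$i$i = 0" for i using h[of i i] by simp
  show ?thesis using h[of 1 2] h[of 1 3] h[of 2 3] d[of 1] d[of 2] d[of 3] by (simp add: crd field_simps)
qed
lemma is_skew_skew: "is_skew (skew x)" unfolding is_skew_def by (simp add: transpose_skew)
lemma psi_mult_skew: "psi (B ** skew z) = Emat B *v z" by (simp add: crd field_simps)
lemma trace_skew_skew: "trace (transpose (skew a) ** skew b) = 2 * (a \<bullet> b)" by (simp add: crd algebra_simps)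
lemma trace_mult_skew: "trace (M ** skew x) = - 2 * (psi M \<bullet> x)" by (simp add: crd field_simps)
lemma trace_tt: "trace (transpose X ** X) = X \<bullet> X"
  by (simp add: trace_def inner_vec_def matrix_matrix_mult_def transpose_def, subst sum.swap, simp)
lemma Ra_axis: "Ra t u *v u = u" by (simp add: Ra_def crd algebra_simps)
lemma Ra_0[simp]: "Ra 0 u = mat 1" by (simp add: Ra_def)

lemma mm_add_r: "(A + B) ** (C::real^3^3) = A ** C + B ** (C::real^3^3)"
  by (vector matrix_matrix_mult_def sum.distrib[symmetric] field_simps)

lemma bb_mm: "bounded_bilinear (\<lambda>(A::real^3^3) (B::real^3^3). A ** B)"
  unfolding bilinear_conv_bounded_bilinear[symmetric] bilinear_def
  by (auto intro!: linearI simp: matrix_add_ldistrib mm_add_r matrix_scalar_ac scalar_matrix_assoc[symmetric])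

lemma bb_mv: "bounded_bilinear (\<lambda>(A::real^3^3) (x::real^3). A *v x)"
  unfolding bilinear_conv_bounded_bilinear[symmetric] bilinear_def
  by (auto intro!: linearI simp: matrix_vector_right_distrib matrix_vector_mult_add_rdistrib
        matrix_vector_mult_scaleR scaleR_matrix_vector_assoc)

lemma bl_transpose: "bounded_linear (\<lambda>A::real^3^3. transpose A)"
  unfolding linear_conv_bounded_linear[symmetric]
  by (auto intro!: linearI simp: transpose_scalar) (simp add: transpose_def vec_eq_iff)

lemma bl_trace: "bounded_linear (\<lambda>A::real^3^3. trace A)"
  unfolding linear_conv_bounded_linear[symmetric]
  by (auto intro!: linearI simp: trace_add) (simp add: trace_def sum_distrib_left)

lemma bl_psi: "bounded_linear psi"
  unfolding linear_conv_bounded_linear[symmetric]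
  by (auto intro!: linearI simp: psi_add psi_scale)

lemma bl_skew: "bounded_linear skew"
  unfolding linear_conv_bounded_linear[symmetric]
  by (auto intro!: linearI simp: skew_add skew_scale)

lemma K3: assumes "norm u = 1" shows "skew u ** skew u ** skew u = - skew u"
proof -
  have n: "u$1^2 + u$2^2 + u$3^2 = 1" using assms by (simp add: norm_eq_1 inner_vec_def sum_3 power2_eq_square)
  show ?thesis apply (simp add: crd) using n by algebra
qed

lemma Ra_orth: assumes "norm u = 1" shows "transpose (Ra t u) ** Ra t u = mat 1"
proof -
  have n: "u$1^2 + u$2^2 + u$3^2 = 1" using assms by (simp add: norm_eq_1 inner_vec_def sum_3 power2_eq_square)
  have sc: "sin t ^2 + cos t ^2 = 1" by simp
  show ?thesis unfolding Ra_def
    apply (simp add: crd)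
    using n sc by algebra
qed

lemma unit_n: "norm (u::real^3) = 1 \<Longrightarrow> u$1^2 + u$2^2 + u$3^2 = 1"
  by (simp add: norm_eq_1 inner_vec_def sum_3 power2_eq_square)

lemma det_Ra: assumes "norm u = 1" shows "det (Ra t u) = 1"
proof -
  have n: "u$1^2 + u$2^2 + u$3^2 = 1" using assms by (rule unit_n)
  have sc: "sin t ^2 + cos t ^2 = 1" by simp
  show ?thesis unfolding Ra_def
    apply (simp add: det_3 matrix_matrix_mult_def sum_3 skew_nth mat_def)
    using n sc by algebra
qed

lemma orth_both: "transpose (Q::real^3^3) ** Q = mat 1 \<Longrightarrow> Q ** transpose Q = mat 1"
  using matrix_left_right_inverse by blast

lemma rot_Ra: "norm u = 1 \<Longrightarrow> rotation_matrix (Ra t u)"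
  unfolding rotation_matrix_def orthogonal_matrix using Ra_orth det_Ra by blast

lemma rot_transpose: "rotation_matrix Q \<Longrightarrow> rotation_matrix (transpose (Q::real^3^3))"
  unfolding rotation_matrix_def by (simp add: det_transpose)

lemma rot_orth: "rotation_matrix (Q::real^3^3) \<Longrightarrow> transpose Q ** Q = mat 1 \<and> Q ** transpose Q = mat 1"
  unfolding rotation_matrix_def orthogonal_matrix_def by blast

lemma conj_skew: assumes "rotation_matrix (Q::real^3^3)"
  shows "Q ** skew x ** transpose Q = skew (Q *v x)"
proof -
  have o: "Q ** transpose Q = mat 1" using rot_orth[OF assms] by blast
  show ?thesis
  proof (subst matrix_eq, intro allI)
    fix y
    have "(Q ** skew x ** transpose Q) *v y = Q *v (cross3 x (transpose Q *v y))"
      by (simp add: matrix_vector_mul_assoc[symmetric] skew_mult)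
    also have "\<dots> = cross3 (Q *v x) (Q *v (transpose Q *v y))"
      using cross_rotation_matrix[OF assms] by simp
    also have "Q *v (transpose Q *v y) = y" by (simp add: matrix_vector_mul_assoc o del: transpose_matrix_vector)
    finally show "(Q ** skew x ** transpose Q) *v y = skew (Q *v x) *v y" by (simp add: skew_mult)
  qed
qed

lemma psi_conj: assumes "rotation_matrix (Q::real^3^3)"
  shows "psi (Q ** B ** transpose Q) = Q *v psi B"
proof -
  define S where "S = (1/2) *\<^sub>R (B + transpose B)"
  have B: "B = S + skew (psi B)"
    unfolding S_def using skew_part[of B] by (simp add: algebra_simps vec_eq_iff)
  have St: "transpose S = S" unfolding S_def by (simp add: transpose_scalar transpose_def vec_eq_iff add.commute)
  have "Q ** B ** transpose Q = Q ** S ** transpose Q + Q ** skew (psi B) ** transpose Q"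
    by (subst B) (simp add: matrix_add_ldistrib mm_add_r)
  moreover have "psi (Q ** S ** transpose Q) = 0"
    by (rule psi_sym) (simp add: matrix_transpose_mul St matrix_mul_assoc)
  ultimately show ?thesis by (simp add: psi_add conj_skew[OF assms])
qed

lemma Ra_deriv: assumes "norm u = 1"
  shows "((\<lambda>t. Ra t u) has_vector_derivative (Ra t u ** skew u)) (at t)"
proof -
  let ?K = "skew u"
  have d: "((\<lambda>t. mat 1 + sin t *\<^sub>R ?K + (1 - cos t) *\<^sub>R (?K ** ?K)) has_vector_derivative
      (cos t *\<^sub>R ?K + sin t *\<^sub>R (?K ** ?K))) (at t)"
    by (auto intro!: derivative_eq_intros)
  have "Ra t u ** ?K = ?K + sin t *\<^sub>R (?K ** ?K) + (1 - cos t) *\<^sub>R (?K ** ?K ** ?K)"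
    unfolding Ra_def by (simp add: mm_add_r scalar_matrix_assoc[symmetric] matrix_mul_assoc)
  also have "\<dots> = cos t *\<^sub>R ?K + sin t *\<^sub>R (?K ** ?K)"
    using K3[OF assms] by (simp add: algebra_simps)
  finally show ?thesis using d unfolding Ra_def by simp
qed

lemma trace_scale: "trace (c *\<^sub>R (X::real^3^3)) = c * trace X"
  by (simp add: trace_def sum_distrib_left)

lemma Upot_line:
  "Upot A \<gamma> u (R + s *\<^sub>R (R ** W)) th =
     Upot A \<gamma> u R th - s * trace (Ra th u ** A ** R ** W)"
proof -
  have e1: "(R + s *\<^sub>R (R ** W)) ** Ra th u = R ** Ra th u + s *\<^sub>R (R ** W ** Ra th u)"
    by (simp add: mm_add_r scalar_matrix_assoc[symmetric])
  have "A ** (mat 1 - (R + s *\<^sub>R (R ** W)) ** Ra th u) =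
        A ** (mat 1 - R ** Ra th u) - A ** (s *\<^sub>R (R ** W ** Ra th u))"
    unfolding e1 by (simp add: bounded_bilinear.diff_right[OF bb_mm] bounded_bilinear.add_right[OF bb_mm])
  also have "\<dots> = A ** (mat 1 - R ** Ra th u) - s *\<^sub>R (A ** (R ** W ** Ra th u))"
    by (simp add: bounded_bilinear.scaleR_right[OF bb_mm])
  finally have e2: "A ** (mat 1 - (R + s *\<^sub>R (R ** W)) ** Ra th u) =
        A ** (mat 1 - R ** Ra th u) - s *\<^sub>R (A ** (R ** W ** Ra th u))" .
  have "trace (A ** (R ** W ** Ra th u)) = trace (Ra th u ** (A ** (R ** W)))"
    using trace_mul_sym[of "A ** (R ** W)" "Ra th u"] by (simp add: matrix_mul_assoc)
  then have e3: "trace (A ** (R ** W ** Ra th u)) = trace (Ra th u ** A ** R ** W)"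
    by (simp add: matrix_mul_assoc)
  show ?thesis
    unfolding Upot_def Tmap_def e2 using e3
    by (simp add: trace_sub trace_scale)
qed
lemma Upot_line_deriv:
  "((\<lambda>s. Upot A \<gamma> u (R + s *\<^sub>R (R ** skew w)) th) has_real_derivative
       2 * (psi (Ra th u ** A ** R) \<bullet> w)) (at 0)"
proof -
  have "((\<lambda>s. Upot A \<gamma> u R th - s * trace (Ra th u ** A ** R ** skew w)) has_real_derivative
       - trace (Ra th u ** A ** R ** skew w)) (at 0)"
    using DERIV_diff[OF DERIV_const[of "Upot A \<gamma> u R th"] DERIV_cmult_right[OF DERIV_ident, of "trace (Ra th u ** A ** R ** skew w)" 0]] by simp
  then show ?thesis by (simp add: Upot_line trace_mult_skew)
qed

lemma gradR_formula:
  assumes o: "transpose R ** R = mat 1"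
  shows "gradR (\<lambda>X. Upot A \<gamma> u X th) R = R ** skew (psi (Ra th u ** A ** R))"
proof -
  let ?p = "psi (Ra th u ** A ** R)"
  let ?P = "\<lambda>G. (\<exists>\<Omega>G. is_skew \<Omega>G \<and> G = R ** \<Omega>G) \<and>
      (\<forall>\<Omega>. is_skew \<Omega> \<longrightarrow>
         ((\<lambda>s. Upot A \<gamma> u (R + s *\<^sub>R (R ** \<Omega>)) th) has_real_derivative
            frob (transpose R ** G) \<Omega>) (at 0))"
  have RR: "transpose R ** (R ** X) = X" for X by (simp add: matrix_mul_assoc o)
  have P1: "?P (R ** skew ?p)"
  proof (intro conjI allI impI)
    show "\<exists>\<Omega>G. is_skew \<Omega>G \<and> R ** skew ?p = R ** \<Omega>G" using is_skew_skew by blast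
  next
    fix W assume W: "is_skew W"
    have "frob (transpose R ** (R ** skew ?p)) W = 2 * (?p \<bullet> psi W)"
      unfolding frob_def RR by (subst is_skew_eq[OF W]) (simp add: trace_skew_skew)
    then show "((\<lambda>s. Upot A \<gamma> u (R + s *\<^sub>R (R ** W)) th) has_real_derivative
            frob (transpose R ** (R ** skew ?p)) W) (at 0)"
      using Upot_line_deriv[of A \<gamma> u R "psi W" th] is_skew_eq[OF W] by simp
  qed
  have P2: "G = R ** skew ?p" if "?P G" for G
  proof -
    from that obtain WG where WG: "is_skew WG" "G = R ** WG" by blast
    define g where "g = psi WG"
    have G: "G = R ** skew g" using WG(2) is_skew_eq[OF WG(1)] g_def by simp
    have "2 * (g \<bullet> w) = 2 * (?p \<bullet> w)" for w
    proof -
      have d1: "((\<lambda>s. Upot A \<gamma> u (R + s *\<^sub>R (R ** skew w)) th) has_real_derivative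
            frob (transpose R ** G) (skew w)) (at 0)"
        using that is_skew_skew by blast
      have "frob (transpose R ** G) (skew w) = 2 * (g \<bullet> w)"
        unfolding frob_def G RR by (simp add: trace_skew_skew)
      then show ?thesis using DERIV_unique[OF d1 Upot_line_deriv] by simp
    qed
    then have H: "g \<bullet> w = ?p \<bullet> w" for w by simp
    have "(g - ?p) \<bullet> (g - ?p) = g \<bullet> (g - ?p) - ?p \<bullet> (g - ?p)" by (simp add: inner_diff_left)
    then have "(g - ?p) \<bullet> (g - ?p) = 0" using H[of "g - ?p"] by simp
    then have "g = ?p" by simp
    then show ?thesis using G by simp
  qed
  show ?thesis unfolding gradR_def
    apply (rule the_equality[of ?P])
    using P1 apply blast
    using P2 apply blast
    done
qed

lemma part2_gen:
  assumes o: "transpose R ** R = mat 1" and u: "norm u = 1"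
  shows "psi (transpose R ** gradR (\<lambda>X. Upot A \<gamma> u X th) R) = Ra th u *v psi (A ** Tmap u R th)"
proof -
  have "psi (transpose R ** gradR (\<lambda>X. Upot A \<gamma> u X th) R) = psi (Ra th u ** A ** R)"
    unfolding gradR_formula[OF o] by (simp add: matrix_mul_assoc o)
  also have "Ra th u ** A ** R = Ra th u ** (A ** Tmap u R th) ** transpose (Ra th u)"
    using rot_orth[OF rot_Ra[OF u]] unfolding Tmap_def by (simp add: matrix_mul_assoc[symmetric])
  finally show ?thesis using psi_conj[OF rot_Ra[OF u]] by simp
qed

lemma mm_deriv:
  assumes "(F has_vector_derivative F') (at t)" "(G has_vector_derivative G') (at t)"
  shows "((\<lambda>s. (F s::real^3^3) ** (G s::real^3^3)) has_vector_derivative (F t ** G' + F' ** G t)) (at t)"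
  using bounded_bilinear.has_vector_derivative[OF bb_mm assms] by simp

lemma mv_deriv:
  assumes "(F has_vector_derivative F') (at t)" "(G has_vector_derivative G') (at t)"
  shows "((\<lambda>s. (F s::real^3^3) *v (G s::real^3)) has_vector_derivative (F t *v G' + F' *v G t)) (at t)"
  using bounded_bilinear.has_vector_derivative[OF bb_mv assms] by simp

lemma trace_deriv:
  assumes "(F has_vector_derivative F') (at t)"
  shows "((\<lambda>s. trace (F s::real^3^3)) has_real_derivative trace F') (at t)"
  using bounded_linear.has_vector_derivative[OF bl_trace assms]
  by (simp add: has_real_derivative_iff_has_vector_derivative)

lemma Upot_theta_deriv:
  assumes u: "norm u = 1"
  shows "((\<lambda>t. Upot A \<gamma> u R t) has_real_derivative (\<gamma> * th + 2 * (u \<bullet> psi (A ** Tmap u R th)))) (at th)"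
proof -
  have d1: "((\<lambda>t. R ** Ra t u) has_vector_derivative (R ** (Ra th u ** skew u))) (at th)"
    using mm_deriv[OF has_vector_derivative_const Ra_deriv[OF u]] by simp
  have d2: "((\<lambda>t. A ** (mat 1 - R ** Ra t u)) has_vector_derivative (- (A ** (R ** (Ra th u ** skew u))))) (at th)"
    using mm_deriv[OF has_vector_derivative_const has_vector_derivative_diff[OF has_vector_derivative_const d1]]
    by (simp add: bounded_bilinear.minus_right[OF bb_mm])
  have d3: "((\<lambda>t. trace (A ** (mat 1 - R ** Ra t u))) has_real_derivative
      - trace (A ** (R ** (Ra th u ** skew u)))) (at th)"
    using trace_deriv[OF d2] by (simp add: trace_def sum_negf)
  have "- trace (A ** (R ** (Ra th u ** skew u))) = 2 * (u \<bullet> psi (A ** Tmap u R th))"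
    unfolding Tmap_def by (simp add: matrix_mul_assoc trace_mult_skew inner_commute)
  moreover have dq: "((\<lambda>t. \<gamma> / 2 * t\<^sup>2) has_real_derivative \<gamma> * th) (at th)"
    by (auto intro!: derivative_eq_intros)
  ultimately have "((\<lambda>t. trace (A ** (mat 1 - R ** Ra t u)) + \<gamma> / 2 * t\<^sup>2) has_real_derivative
      2 * (u \<bullet> psi (A ** Tmap u R th)) + \<gamma> * th) (at th)"
    using DERIV_add[OF d3 dq] by simp
  then show ?thesis unfolding Upot_def Tmap_def by (simp add: add.commute)
qed

lemma gradTheta_formula:
  "norm u = 1 \<Longrightarrow> gradTheta A \<gamma> u R th = \<gamma> * th + 2 * (u \<bullet> psi (A ** Tmap u R th))"
  unfolding gradTheta_def by (rule DERIV_imp_deriv[OF Upot_theta_deriv])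

lemma Ra_skew_comm: assumes u: "norm u = 1"
  shows "Ra th u ** skew (transpose (Ra th u) *v w) = skew w ** Ra th u"
proof -
  have r: "rotation_matrix (transpose (Ra th u))" by (rule rot_transpose[OF rot_Ra[OF u]])
  have o: "Ra th u ** transpose (Ra th u) = mat 1" using rot_orth[OF rot_Ra[OF u]] by blast
  have "skew (transpose (Ra th u) *v w) = transpose (Ra th u) ** skew w ** Ra th u"
    using conj_skew[OF r, of w] by simp
  then show ?thesis by (simp add: matrix_mul_assoc o)
qed

lemma Ra_chain:
  assumes u: "norm u = 1" and dth: "(tht has_real_derivative v) (at t)"
  shows "((\<lambda>s. Ra (tht s) u) has_vector_derivative v *\<^sub>R (Ra (tht t) u ** skew u)) (at t)"
  using vector_diff_chain_at[OF dth[unfolded has_real_derivative_iff_has_vector_derivative] Ra_deriv[OF u]]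
  by (simp add: o_def)

lemma part1_gen:
  assumes u: "norm u = 1"
    and dR: "(Rt has_vector_derivative (Rt t ** skew w)) (at t)"
    and dth: "(tht has_real_derivative v) (at t)"
  shows "((\<lambda>s. Tmap u (Rt s) (tht s)) has_vector_derivative
            (Tmap u (Rt t) (tht t) ** skew (transpose (Ra (tht t) u) *v w + v *\<^sub>R u))) (at t)"
proof -
  let ?Q = "Ra (tht t) u" and ?R = "Rt t"
  have d: "((\<lambda>s. Rt s ** Ra (tht s) u) has_vector_derivative
      (?R ** (v *\<^sub>R (?Q ** skew u)) + (?R ** skew w) ** ?Q)) (at t)"
    by (rule mm_deriv[OF dR Ra_chain[OF u dth]])
  have "?R ** ?Q ** skew (transpose ?Q *v w + v *\<^sub>R u)
     = ?R ** (?Q ** skew (transpose ?Q *v w)) + v *\<^sub>R (?R ** ?Q ** skew u)"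
    by (simp add: skew_add skew_scale matrix_add_ldistrib scalar_matrix_assoc[symmetric] bounded_bilinear.scaleR_right[OF bb_mm] matrix_mul_assoc)
  also have "\<dots> = ?R ** (v *\<^sub>R (?Q ** skew u)) + (?R ** skew w) ** ?Q"
    by (simp add: Ra_skew_comm[OF u] bounded_bilinear.scaleR_right[OF bb_mm] matrix_mul_assoc add.commute del: transpose_matrix_vector)
  finally show ?thesis using d unfolding Tmap_def by simp
qed

lemma trace_two: "trace (2 * (X::real^3^3)) = 2 * trace X"
  by (simp add: trace_def sum_3 algebra_simps)

lemma orth_prop:
  fixes Rt :: "real \<Rightarrow> real^3^3"
  assumes R0: "transpose (Rt 0) ** Rt 0 = mat 1"
    and dR: "\<forall>s. (Rt has_vector_derivative (Rt s ** skew (\<omega> s))) (at s)"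
  shows "transpose (Rt t) ** Rt t = mat 1"
proof -
  define M where "M s = transpose (Rt s) ** Rt s" for s
  have Mt: "transpose (M s) = M s" for s unfolding M_def by (simp add: matrix_transpose_mul)
  have dM: "(M has_vector_derivative (M s ** skew (\<omega> s) - skew (\<omega> s) ** M s)) (at s)" for s
  proof -
    have dT: "((\<lambda>s. transpose (Rt s)) has_vector_derivative transpose (Rt s ** skew (\<omega> s))) (at s)"
      using bounded_linear.has_vector_derivative[OF bl_transpose dR[rule_format, of s]] .
    have "(M has_vector_derivative (transpose (Rt s) ** (Rt s ** skew (\<omega> s)) + transpose (Rt s ** skew (\<omega> s)) ** Rt s)) (at s)"
      unfolding M_def[abs_def] by (rule mm_deriv[OF dT dR[rule_format]])
    then show ?thesis
      by (simp add: M_def matrix_transpose_mul transpose_skew matrix_mul_assoc bounded_bilinear.minus_left[OF bb_mm] bounded_bilinear.minus_right[OF bb_mm])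
  qed
  have tr1: "((\<lambda>s. trace (M s)) has_real_derivative 0) (at s)" for s
  proof -
    have "trace (M s ** skew (\<omega> s) - skew (\<omega> s) ** M s) = 0"
      by (simp add: trace_sub trace_mul_sym[of "M s"])
    then show ?thesis using trace_deriv[OF dM[of s]] by simp
  qed
  have tr2: "((\<lambda>s. trace (M s ** M s)) has_real_derivative 0) (at s)" for s
  proof -
    let ?W = "skew (\<omega> s)"
    have e: "trace (M s ** M s ** ?W) = trace (M s ** ?W ** M s)"
      using trace_mul_sym[of "M s ** ?W" "M s"] by (simp add: matrix_mul_assoc)
    have e2: "trace (?W ** M s ** M s) = trace (M s ** ?W ** M s)"
      using trace_mul_sym[of "?W ** M s" "M s"] by (simp add: matrix_mul_assoc)
    have "trace (M s ** (M s ** ?W - ?W ** M s) + (M s ** ?W - ?W ** M s) ** M s) = 0"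
      by (simp add: trace_add trace_sub bounded_bilinear.diff_right[OF bb_mm] bounded_bilinear.diff_left[OF bb_mm] matrix_mul_assoc e e2)
    then show ?thesis using trace_deriv[OF mm_deriv[OF dM[of s] dM[of s]]] by simp
  qed
  have M0: "M 0 = mat 1" using R0 M_def by simp
  have c1: "trace (M t) = 3"
    using DERIV_isconst_all[of "\<lambda>s. trace (M s)" t 0] tr1 M0 by (simp add: trace_I)
  have c2: "trace (M t ** M t) = 3"
    using DERIV_isconst_all[of "\<lambda>s. trace (M s ** M s)" t 0] tr2 M0 by (simp add: trace_I)
  define X where "X = M t - mat 1"
  have XT: "transpose X = X"
  proof -
    have "transpose (M t - mat 1) = transpose (M t) - transpose (mat 1)" by (simp add: transpose_def vec_eq_iff)
    then show ?thesis unfolding X_def using Mt by simp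
  qed
  have "trace (transpose X ** X) = trace (M t ** M t) - 2 * trace (M t) + 3"
    unfolding XT unfolding X_def
    by (simp add: Mt bounded_bilinear.diff_right[OF bb_mm] bounded_bilinear.diff_left[OF bb_mm] trace_sub trace_I trace_add trace_two
         transpose_def[of "mat 1"] )
  then have "X \<bullet> X = 0" using c1 c2 trace_tt[of X] by simp
  then have "X = 0" by simp
  then show ?thesis unfolding X_def M_def by simp
qed

lemma part5_gen:
  fixes Rt :: "real \<Rightarrow> real^3^3"
  assumes u: "norm u = 1"
    and R0: "transpose (Rt 0) ** Rt 0 = mat 1"
    and dR: "\<forall>s. (Rt has_vector_derivative (Rt s ** skew (\<omega> s))) (at s)"
    and dth: "\<forall>s. (tht has_real_derivative v s) (at s)"
  shows "((\<lambda>s. psi (transpose (Rt s) ** gradR (\<lambda>X. Upot A \<gamma> u X (tht s)) (Rt s)))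
           has_vector_derivative
            (DR A u (Rt t) (tht t) *v \<omega> t + v t *\<^sub>R Dtheta A u (Rt t) (tht t))) (at t)"
proof -
  let ?T = "\<lambda>s. Tmap u (Rt s) (tht s)"
  let ?Q = "Ra (tht t) u"
  let ?z = "transpose ?Q *v \<omega> t + v t *\<^sub>R u"
  let ?E = "Emat (A ** ?T t)"
  let ?p = "psi (A ** ?T t)"
  let ?K = "skew u"
  have feq: "(\<lambda>s. psi (transpose (Rt s) ** gradR (\<lambda>X. Upot A \<gamma> u X (tht s)) (Rt s)))
      = (\<lambda>s. Ra (tht s) u *v psi (A ** ?T s))"
    using part2_gen[OF orth_prop[OF R0 dR] u] by auto
  have dT: "(?T has_vector_derivative (?T t ** skew ?z)) (at t)"
    using part1_gen[OF u dR[rule_format, of t] dth[rule_format, of t]] .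
  have dAT: "((\<lambda>s. A ** ?T s) has_vector_derivative (A ** (?T t ** skew ?z))) (at t)"
    using mm_deriv[OF has_vector_derivative_const dT] by simp
  have dp: "((\<lambda>s. psi (A ** ?T s)) has_vector_derivative (?E *v ?z)) (at t)"
    using bounded_linear.has_vector_derivative[OF bl_psi dAT]
    by (simp add: matrix_mul_assoc psi_mult_skew)
  have d: "((\<lambda>s. Ra (tht s) u *v psi (A ** ?T s)) has_vector_derivative
       (?Q *v (?E *v ?z) + (v t *\<^sub>R (?Q ** ?K)) *v ?p)) (at t)"
    by (rule mv_deriv[OF Ra_chain[OF u dth[rule_format, of t]] dp])
  have c1: "(?Q ** ?K) *v ?p = - (skew (?Q *v ?p) *v u)"
  proof -
    have "(?Q ** ?K) *v ?p = ?Q *v cross3 u ?p" by (simp add: matrix_vector_mul_assoc[symmetric] skew_mult)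
    also have "\<dots> = cross3 (?Q *v u) (?Q *v ?p)" using cross_rotation_matrix[OF rot_Ra[OF u]] by simp
    also have "\<dots> = cross3 u (?Q *v ?p)" by (simp add: Ra_axis)
    also have "\<dots> = - cross3 (?Q *v ?p) u" by (rule cross_skew)
    finally show ?thesis by (simp add: skew_mult)
  qed
  have c2: "?Q *v (?E *v ?z) = (?Q ** ?E ** transpose ?Q) *v \<omega> t + v t *\<^sub>R ((?Q ** ?E) *v u)"
    by (simp add: matrix_vector_right_distrib matrix_vector_mul_assoc matrix_vector_mult_scaleR matrix_mul_assoc del: transpose_matrix_vector)
  have "?Q *v (?E *v ?z) + (v t *\<^sub>R (?Q ** ?K)) *v ?p
      = DR A u (Rt t) (tht t) *v \<omega> t + v t *\<^sub>R Dtheta A u (Rt t) (tht t)"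
    unfolding c2 DR_def Dtheta_def
    by (simp add: scaleR_matrix_vector_assoc[symmetric] c1 algebra_simps del: transpose_matrix_vector)
  then show ?thesis using d feq by simp
qed

lemma sym_entries: assumes "transpose A = A" shows "A$j$i = A$i$j"
proof -
  have "transpose A $ i $ j = A $ i $ j" using assms by simp
  then show ?thesis by (simp add: transpose_def)
qed

lemma psi_AKK: assumes s: "transpose A = A" and e: "A *v w = c *\<^sub>R w"
  shows "psi (A ** skew w ** skew w) = 0"
proof -
  have e1: "A$1$1 * w$1 + A$1$2 * w$2 + A$1$3 * w$3 = c * w$1"
   and e2: "A$2$1 * w$1 + A$2$2 * w$2 + A$2$3 * w$3 = c * w$2"
   and e3: "A$3$1 * w$1 + A$3$2 * w$2 + A$3$3 * w$3 = c * w$3"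
    using e by (simp_all add: crd)
  have h: "A$2$1 = A$1$2" "A$3$1 = A$1$3" "A$3$2 = A$2$3" using sym_entries[OF s] by auto
  show ?thesis using e1 e2 e3 by (simp add: crd h) algebra
qed

lemma pd_sum: assumes s: "transpose A = A"
  shows "2 * (r \<bullet> (Emat A *v r)) =
     cross3 r (axis 1 1) \<bullet> (A *v cross3 r (axis 1 1)) +
     cross3 r (axis 2 1) \<bullet> (A *v cross3 r (axis 2 1)) +
     cross3 r (axis 3 1) \<bullet> (A *v cross3 r (axis 3 1))"
proof -
  have h: "A$2$1 = A$1$2" "A$3$1 = A$1$3" "A$3$2 = A$2$3" using sym_entries[OF s] by auto
  show ?thesis by (simp add: crd axis_def h) algebra
qed

lemma triple: "cross3 a (cross3 b c) = (a \<bullet> c) *\<^sub>R b - (a \<bullet> b) *\<^sub>R c"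
  by (simp add: crd algebra_simps)

lemma det_neg1: "det (- mat 1 :: real^3^3) = -1"
  by (simp add: det_3 mat_def)

lemma Ra_pi: "Ra pi w *v x = x + 2 *\<^sub>R cross3 w (cross3 w x)"
  by (simp add: Ra_def matrix_vector_mult_add_rdistrib matrix_vector_mul_assoc[symmetric] skew_mult
      scaleR_matrix_vector_assoc[symmetric])

lemma Ra_pi_unit: assumes "norm w = 1" shows "Ra pi w *v x = (2 * (w \<bullet> x)) *\<^sub>R w - x"
proof -
  have "w \<bullet> w = 1" using assms by (simp add: norm_eq_1)
  then have "Ra pi w *v x = x + 2 *\<^sub>R ((w \<bullet> x) *\<^sub>R w - x)" unfolding Ra_pi triple by simp
  also have "\<dots> = (2 * (w \<bullet> x)) *\<^sub>R w - x" by (simp add: scaleR_diff_right scaleR_2)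
  finally show ?thesis .
qed

lemma trace_transpose: "trace (transpose (X::real^3^3)) = trace X"
  by (simp add: trace_def transpose_def)

lemma sym_of_crit:
  fixes R A :: "real^3^3"
  assumes symA: "transpose A = A"
    and posA: "\<forall>x. x \<noteq> 0 \<longrightarrow> x \<bullet> (A *v x) > 0"
    and o: "transpose R ** R = mat 1"
    and c: "psi (A ** R) = 0"
  shows "transpose R = R"
proof -
  have o2: "R ** transpose R = mat 1" using orth_both[OF o] .
  define r where "r = psi R"
  define S where "S = (1/2) *\<^sub>R (R + transpose R)"
  define K where "K = skew r"
  have RS: "R = S + K"
    unfolding S_def K_def r_def using skew_part[of R] by (simp add: algebra_simps vec_eq_iff)
  have Kd: "K = (1/2) *\<^sub>R (R - transpose R)"
    unfolding K_def r_def using skew_part[of R] by simp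
  have St: "transpose S = S" unfolding S_def by (simp add: transpose_scalar transpose_def vec_eq_iff add.commute)
  have Kt: "transpose K = - K" unfolding K_def by (rule transpose_skew)
  have p1: "(R + transpose R) ** (R - transpose R) = R ** R - transpose R ** transpose R"
    by (simp add: bounded_bilinear.add_left[OF bb_mm] bounded_bilinear.diff_right[OF bb_mm] o o2)
  have p2: "(R - transpose R) ** (R + transpose R) = R ** R - transpose R ** transpose R"
    by (simp add: bounded_bilinear.diff_left[OF bb_mm] bounded_bilinear.add_right[OF bb_mm] o o2)
  have SK: "S ** K = K ** S"
    unfolding S_def Kd
    by (simp add: bounded_bilinear.scaleR_left[OF bb_mm] bounded_bilinear.scaleR_right[OF bb_mm] p1 p2)
  have tr0: "trace (A ** S ** K) = 0"
  proof -
    have "trace (A ** S ** K) = trace (transpose (A ** S ** K))" by (simp add: trace_transpose)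
    also have "transpose (A ** S ** K) = - (K ** S ** A)"
      by (simp add: matrix_transpose_mul Kt St symA bounded_bilinear.minus_left[OF bb_mm] matrix_mul_assoc)
    also have "trace (- (K ** S ** A)) = - trace (S ** K ** A)"
      by (simp add: SK trace_def sum_negf)
    also have "trace (S ** K ** A) = trace (A ** S ** K)"
      using trace_mul_sym[of "S ** K" A] by (simp add: matrix_mul_assoc)
    finally show ?thesis by simp
  qed
  have h1: "psi (A ** S) \<bullet> r = 0" using trace_mult_skew[of "A ** S" r] tr0 unfolding K_def by simp
  have "psi (A ** R) = psi (A ** S) + Emat A *v r"
    by (subst RS) (simp add: matrix_add_ldistrib psi_add psi_mult_skew K_def)
  then have "r \<bullet> (psi (A ** S) + Emat A *v r) = 0" using c by simp
  then have z: "r \<bullet> (Emat A *v r) = 0" using h1 by (simp add: inner_commute inner_add_right)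
  have nn: "x \<bullet> (A *v x) \<ge> 0" for x using posA by (cases "x = 0") (auto intro: less_imp_le)
  let ?c = "\<lambda>i. cross3 r (axis i 1)"
  have "?c 1 \<bullet> (A *v ?c 1) + ?c 2 \<bullet> (A *v ?c 2) + ?c 3 \<bullet> (A *v ?c 3) = 0"
    using pd_sum[OF symA, of r] z by simp
  then have "?c 1 \<bullet> (A *v ?c 1) = 0" "?c 2 \<bullet> (A *v ?c 2) = 0"
    using nn[of "?c 1"] nn[of "?c 2"] nn[of "?c 3"] by linarith+
  then have "?c 1 = 0" "?c 2 = 0" using posA by (metis less_irrefl)+
  then have "r = 0" by (simp add: crd axis_def)
  then have "R - transpose R = 0" using skew_part[of R] r_def by simp
  then show ?thesis by simp
qed

lemma col_zero: "(\<forall>j. (M::real^3^3) *v axis j 1 = 0) \<Longrightarrow> M = 0"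
  by (simp add: matrix_vector_mult_basis column_def vec_eq_iff)

lemma inner_mv: "(A *v x) \<bullet> (y::real^3) = x \<bullet> (transpose (A::real^3^3) *v y)"
  by (simp add: dot_lmul_matrix[symmetric] inner_commute)

lemma sym_rot_form:
  fixes R :: "real^3^3"
  assumes o: "transpose R ** R = mat 1" and d: "det R = 1" and s: "transpose R = R"
    and n1: "R \<noteq> mat 1"
  shows "\<exists>w. norm w = 1 \<and> R = Ra pi w"
proof -
  have RR: "R ** R = mat 1" using o s by simp
  have rot: "rotation_matrix R" unfolding rotation_matrix_def orthogonal_matrix using o d by simp
  obtain j where pnz: "(mat 1 + R) *v axis j 1 \<noteq> 0"
  proof -
    have "mat 1 + R \<noteq> 0"
    proof
      assume "mat 1 + R = 0"
      then have "R = - mat 1" by (metis add.commute eq_neg_iff_add_eq_0)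
      then show False using d det_neg1 by simp
    qed
    then show ?thesis using that col_zero by blast
  qed
  obtain k where qnz: "(mat 1 - R) *v axis k 1 \<noteq> 0"
  proof -
    have "mat 1 - R \<noteq> 0" using n1 by simp
    then show ?thesis using that col_zero by blast
  qed
  define p where "p = (mat 1 + R) *v axis j 1"
  define q where "q = (mat 1 - R) *v axis k 1"
  have p0: "p \<noteq> 0" using pnz p_def by simp
  have q0: "q \<noteq> 0" using qnz q_def by simp
  have Rp: "R *v p = p"
    unfolding p_def matrix_vector_mul_assoc by (simp add: matrix_add_ldistrib RR add.commute)
  have Rq: "R *v q = - q"
  proof -
    have "R ** (mat 1 - R) = - (mat 1 - R)" by (simp add: bounded_bilinear.diff_right[OF bb_mm] RR)
    then show ?thesis unfolding q_def matrix_vector_mul_assoc by (simp add: matrix_vector_mult_diff_rdistrib)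
  qed
  have pq: "p \<bullet> q = 0"
  proof -
    have "(R *v p) \<bullet> q = p \<bullet> (R *v q)" using inner_mv[of R p q] s by simp
    then have "p \<bullet> q = - (p \<bullet> q)" using Rp Rq by simp
    then show ?thesis by simp
  qed
  define m where "m = cross3 p q"
  have Rm: "R *v m = - m"
    unfolding m_def using cross_rotation_matrix[OF rot, of p q] Rp Rq by simp
  have "(norm m)\<^sup>2 = (norm p * norm q)\<^sup>2" using norm_cross_dot[of p q] pq m_def by simp
  moreover have "norm p * norm q > 0" using p0 q0 by simp
  ultimately have "(norm m)\<^sup>2 > 0" using p0 q0 by simp
  then have m0: "m \<noteq> 0" by auto
  have pm: "p \<bullet> m = 0" and qm: "q \<bullet> m = 0" unfolding m_def using dot_cross_self by auto
  define w where "w = (1 / norm p) *\<^sub>R p"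
  have nw: "norm w = 1" unfolding w_def using p0 by simp
  have Lp: "Ra pi w *v p = p"
  proof -
    have "w \<bullet> p = norm p" unfolding w_def using p0 by (simp add: power2_norm_eq_inner[symmetric] power2_eq_square)
    then have "(2 * (w \<bullet> p)) *\<^sub>R w = 2 *\<^sub>R p" unfolding w_def using p0 by simp
    then show ?thesis unfolding Ra_pi_unit[OF nw] by (simp add: scaleR_2)
  qed
  have "w \<bullet> q = 0" unfolding w_def using pq by simp
  then have Lq: "Ra pi w *v q = - q" by (simp add: Ra_pi_unit[OF nw])
  have "w \<bullet> m = 0" unfolding w_def using pm by simp
  then have Lm: "Ra pi w *v m = - m" by (simp add: Ra_pi_unit[OF nw])
  define B where "B = {p, q, m}"
  have pw: "pairwise orthogonal B"
    unfolding B_def pairwise_def orthogonal_def using pq pm qm by (auto simp: inner_commute)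
  have B0: "0 \<notin> B" unfolding B_def using p0 q0 m0 by auto
  have ind: "independent B" by (rule pairwise_orthogonal_independent[OF pw B0])
  have dist: "p \<noteq> q" "p \<noteq> m" "q \<noteq> m"
  proof -
    show "p \<noteq> q" proof assume "p = q" then have "p \<bullet> p = 0" using pq by simp then show False using p0 by simp qed
    show "p \<noteq> m" proof assume "p = m" then have "p \<bullet> p = 0" using pm by simp then show False using p0 by simp qed
    show "q \<noteq> m" proof assume "q = m" then have "q \<bullet> q = 0" using qm by simp then show False using q0 by simp qed
  qed
  have cB: "card B = 3" unfolding B_def using dist by auto
  have sp: "UNIV \<subseteq> span B"
    by (rule card_ge_dim_independent) (use ind cB in auto)
  have lin: "linear (\<lambda>x. (R - Ra pi w) *v x)" by simp
  have z: "(R - Ra pi w) *v x = 0" for x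
  proof (rule linear_eq_0_on_span[OF lin])
    show "x \<in> span B" using sp by auto
  next
    fix y assume "y \<in> B"
    then show "(R - Ra pi w) *v y = 0" unfolding B_def
      using Rp Rq Rm Lp Lq Lm by (auto simp: matrix_vector_mult_diff_rdistrib)
  qed
  have "R = Ra pi w" using z by (simp add: matrix_eq matrix_vector_mult_diff_rdistrib)
  then show ?thesis using nw by blast
qed

lemma eig_of_crit:
  fixes R A :: "real^3^3"
  assumes c: "psi (A ** R) = 0" and symA: "transpose A = A" and s: "transpose R = R"
    and R: "R = Ra pi w" and nw: "norm w = 1"
  shows "A *v w = (w \<bullet> (A *v w)) *\<^sub>R w"
proof -
  have "transpose (A ** R) = A ** R" by (rule psi_zero_sym[OF c])
  then have AR: "R ** A = A ** R" by (simp add: matrix_transpose_mul s symA)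
  have Rw: "R *v w = w" unfolding R Ra_pi_unit[OF nw] using nw by (simp add: norm_eq_1 scaleR_2)
  have "R *v (A *v w) = A *v w"
    by (simp add: matrix_vector_mul_assoc AR) (simp add: matrix_vector_mul_assoc[symmetric] Rw)
  then have "(2 * (w \<bullet> (A *v w))) *\<^sub>R w - A *v w = A *v w" unfolding R Ra_pi_unit[OF nw] .
  then have "2 *\<^sub>R (A *v w) = 2 *\<^sub>R ((w \<bullet> (A *v w)) *\<^sub>R w)" by (simp add: scaleR_2 algebra_simps)
  then have "A *v w = (w \<bullet> (A *v w)) *\<^sub>R w \<or> (2::real) = 0" by (simp only: scaleR_cancel_left)
  then show ?thesis by simp
qed

lemma crit_alg:
  fixes A R :: "real^3^3"
  assumes symA: "transpose A = A"
    and posA: "\<forall>x. x \<noteq> 0 \<longrightarrow> x \<bullet> (A *v x) > 0"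
  shows "(R \<in> SO3 \<and> psi (A ** R) = 0) \<longleftrightarrow> R \<in> critV A"
proof
  assume h: "R \<in> SO3 \<and> psi (A ** R) = 0"
  then have o: "transpose R ** R = mat 1" and d: "det R = 1" and c: "psi (A ** R) = 0"
    unfolding SO3_def by auto
  have s: "transpose R = R" by (rule sym_of_crit[OF symA posA o c])
  show "R \<in> critV A"
  proof (cases "R = mat 1")
    case True then show ?thesis unfolding critV_def by simp
  next
    case False
    then obtain w where nw: "norm w = 1" and R: "R = Ra pi w" using sym_rot_form[OF o d s] by blast
    have "A *v w = (w \<bullet> (A *v w)) *\<^sub>R w" by (rule eig_of_crit[OF c symA s R nw])
    then have "w \<in> unit_eigvecs A" unfolding unit_eigvecs_def using nw by blast
    then show ?thesis unfolding critV_def using R by blast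
  qed
next
  assume "R \<in> critV A"
  then consider "R = mat 1" | w where "w \<in> unit_eigvecs A" "R = Ra pi w" unfolding critV_def by blast
  then show "R \<in> SO3 \<and> psi (A ** R) = 0"
  proof cases
    case 1
    then show ?thesis unfolding SO3_def using psi_sym[OF symA] by (simp add: det_I)
  next
    case 2
    then obtain c where nw: "norm w = 1" and e: "A *v w = c *\<^sub>R w" unfolding unit_eigvecs_def by blast
    have so: "R \<in> SO3" unfolding SO3_def using Ra_orth[OF nw] det_Ra[OF nw] 2 by simp
    have "Ra pi w = mat 1 + 2 *\<^sub>R (skew w ** skew w)" unfolding Ra_def by simp
    then have "A ** R = A + 2 *\<^sub>R (A ** skew w ** skew w)"
      using 2 by (simp add: matrix_add_ldistrib bounded_bilinear.scaleR_right[OF bb_mm] matrix_mul_assoc)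
    then have "psi (A ** R) = 0"
      by (simp add: psi_add psi_scale psi_sym[OF symA] psi_AKK[OF symA e])
    then show ?thesis using so by simp
  qed
qed

lemma gradR_zero_iff:
  assumes o: "transpose R ** R = mat 1" and u: "norm u = 1"
  shows "gradR (\<lambda>X. Upot A \<gamma> u X th) R = 0 \<longleftrightarrow> psi (A ** Tmap u R th) = 0"
proof -
  let ?x = "psi (A ** Tmap u R th)"
  let ?Q = "Ra th u"
  have "psi (transpose R ** (R ** skew (psi (?Q ** A ** R)))) = ?Q *v ?x"
    using part2_gen[OF o u, of A \<gamma> th] unfolding gradR_formula[OF o] .
  then have p: "psi (?Q ** A ** R) = ?Q *v ?x" by (simp add: matrix_mul_assoc o)
  have G: "gradR (\<lambda>X. Upot A \<gamma> u X th) R = R ** skew (?Q *v ?x)"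
    unfolding gradR_formula[OF o] p ..
  have Qo: "transpose ?Q ** ?Q = mat 1" by (rule Ra_orth[OF u])
  show ?thesis
  proof
    assume "gradR (\<lambda>X. Upot A \<gamma> u X th) R = 0"
    then have "transpose R ** (R ** skew (?Q *v ?x)) = 0" using G by simp
    then have "skew (?Q *v ?x) = 0" by (simp add: matrix_mul_assoc o)
    then have "?Q *v ?x = 0" using psi_skew by (metis psi_skew skew_0)
    then have "transpose ?Q *v (?Q *v ?x) = 0" by simp
    then show "?x = 0" by (simp add: matrix_vector_mul_assoc Qo del: transpose_matrix_vector)
  next
    assume "?x = 0"
    then show "gradR (\<lambda>X. Upot A \<gamma> u X th) R = 0" using G by simp
  qed
qed

lemma critU_eq:
  fixes A :: "real^3^3"
  assumes symA: "transpose A = A"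
    and posA: "\<forall>x. x \<noteq> 0 \<longrightarrow> x \<bullet> (A *v x) > 0"
    and u: "norm u = 1" and g: "\<gamma> > 0"
  shows "critU A \<gamma> u = critV A \<times> {0}"
proof (intro set_eqI iffI)
  fix z assume "z \<in> critU A \<gamma> u"
  then obtain R th where z: "z = (R, th)" and so: "R \<in> SO3"
    and g1: "gradR (\<lambda>X. Upot A \<gamma> u X th) R = 0" and g2: "gradTheta A \<gamma> u R th = 0"
    unfolding critU_def by blast
  have o: "transpose R ** R = mat 1" using so unfolding SO3_def by blast
  have x0: "psi (A ** Tmap u R th) = 0" using gradR_zero_iff[OF o u] g1 by blast
  have "\<gamma> * th = 0" using g2 gradTheta_formula[OF u, of A \<gamma> R th] x0 by simp
  then have th: "th = 0" using g by simp
  then have "psi (A ** R) = 0" using x0 unfolding Tmap_def by simp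
  then have "R \<in> critV A" using crit_alg[OF symA posA] so by blast
  then show "z \<in> critV A \<times> {0}" using z th by simp
next
  fix z assume "z \<in> critV A \<times> {0::real}"
  then obtain R where z: "z = (R, 0)" and R: "R \<in> critV A" by blast
  have so: "R \<in> SO3" and c: "psi (A ** R) = 0" using crit_alg[OF symA posA] R by blast+
  have o: "transpose R ** R = mat 1" using so unfolding SO3_def by blast
  have x0: "psi (A ** Tmap u R 0) = 0" using c unfolding Tmap_def by simp
  have "gradR (\<lambda>X. Upot A \<gamma> u X 0) R = 0" using gradR_zero_iff[OF o u] x0 by blast
  moreover have "gradTheta A \<gamma> u R 0 = 0" using gradTheta_formula[OF u, of A \<gamma> R 0] x0 by simp
  ultimately show "z \<in> critU A \<gamma> u" unfolding critU_def using z so by simp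
qed

theorem lemma2:
  fixes A :: "real^3^3" and u :: "real^3" and \<gamma> :: real
  assumes symA: "transpose A = A"
    and posA: "\<forall>x. x \<noteq> 0 \<longrightarrow> x \<bullet> (A *v x) > 0"
    and u_unit: "norm u = 1"
    and \<gamma>_pos: "\<gamma> > 0"
  shows
    "(\<forall>(Rt :: real \<Rightarrow> real^3^3) (tht :: real \<Rightarrow> real) (\<omega> :: real \<Rightarrow> real^3) (v :: real \<Rightarrow> real) t.
        Rt 0 \<in> SO3 \<and> (\<forall>s. (Rt has_vector_derivative (Rt s ** skew (\<omega> s))) (at s))
        \<and> (\<forall>s. (tht has_real_derivative v s) (at s)) \<longrightarrow>
        ((\<lambda>s. Tmap u (Rt s) (tht s)) has_vector_derivative
            (Tmap u (Rt t) (tht t) ** skew (transpose (Ra (tht t) u) *v \<omega> t + v t *\<^sub>R u))) (at t))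
   \<and> (\<forall>R th. R \<in> SO3 \<longrightarrow>
        psi (transpose R ** gradR (\<lambda>X. Upot A \<gamma> u X th) R) = Ra th u *v psi (A ** Tmap u R th))
   \<and> (\<forall>R th. R \<in> SO3 \<longrightarrow>
        gradTheta A \<gamma> u R th = \<gamma> * th + 2 * (u \<bullet> psi (A ** Tmap u R th)))
   \<and> critU A \<gamma> u = critV A \<times> {0}
   \<and> (mat 1, 0) \<in> critU A \<gamma> u
   \<and> (\<forall>(Rt :: real \<Rightarrow> real^3^3) (tht :: real \<Rightarrow> real) (\<omega> :: real \<Rightarrow> real^3) (v :: real \<Rightarrow> real) t.
        Rt 0 \<in> SO3 \<and> (\<forall>s. (Rt has_vector_derivative (Rt s ** skew (\<omega> s))) (at s))
        \<and> (\<forall>s. (tht has_real_derivative v s) (at s)) \<longrightarrow>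
        ((\<lambda>s. psi (transpose (Rt s) ** gradR (\<lambda>X. Upot A \<gamma> u X (tht s)) (Rt s)))
           has_vector_derivative
            (DR A u (Rt t) (tht t) *v \<omega> t + v t *\<^sub>R Dtheta A u (Rt t) (tht t))) (at t))"
proof -
  have part1: "\<forall>(Rt :: real \<Rightarrow> real^3^3) (tht :: real \<Rightarrow> real) (\<omega> :: real \<Rightarrow> real^3) (v :: real \<Rightarrow> real) t.
        Rt 0 \<in> SO3 \<and> (\<forall>s. (Rt has_vector_derivative (Rt s ** skew (\<omega> s))) (at s))
        \<and> (\<forall>s. (tht has_real_derivative v s) (at s)) \<longrightarrow>
        ((\<lambda>s. Tmap u (Rt s) (tht s)) has_vector_derivative
            (Tmap u (Rt t) (tht t) ** skew (transpose (Ra (tht t) u) *v \<omega> t + v t *\<^sub>R u))) (at t)"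
    using part1_gen[OF u_unit] by blast
  have part2: "\<forall>R th. R \<in> SO3 \<longrightarrow>
        psi (transpose R ** gradR (\<lambda>X. Upot A \<gamma> u X th) R) = Ra th u *v psi (A ** Tmap u R th)"
    using part2_gen[OF _ u_unit] unfolding SO3_def by blast
  have part3: "\<forall>R th. R \<in> SO3 \<longrightarrow>
        gradTheta A \<gamma> u R th = \<gamma> * th + 2 * (u \<bullet> psi (A ** Tmap u R th))"
    using gradTheta_formula[OF u_unit] by blast
  have part4: "critU A \<gamma> u = critV A \<times> {0}"
    by (rule critU_eq[OF symA posA u_unit \<gamma>_pos])
  have part4b: "(mat 1, 0) \<in> critU A \<gamma> u"
    unfolding part4 critV_def by simp
  have part5: "\<forall>(Rt :: real \<Rightarrow> real^3^3) (tht :: real \<Rightarrow> real) (\<omega> :: real \<Rightarrow> real^3) (v :: real \<Rightarrow> real) t.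
        Rt 0 \<in> SO3 \<and> (\<forall>s. (Rt has_vector_derivative (Rt s ** skew (\<omega> s))) (at s))
        \<and> (\<forall>s. (tht has_real_derivative v s) (at s)) \<longrightarrow>
        ((\<lambda>s. psi (transpose (Rt s) ** gradR (\<lambda>X. Upot A \<gamma> u X (tht s)) (Rt s)))
           has_vector_derivative
            (DR A u (Rt t) (tht t) *v \<omega> t + v t *\<^sub>R Dtheta A u (Rt t) (tht t))) (at t)"
  proof (intro allI impI)
    fix Rt :: "real \<Rightarrow> real^3^3" and tht :: "real \<Rightarrow> real" and \<omega> :: "real \<Rightarrow> real^3" and v :: "real \<Rightarrow> real" and t
    assume h: "Rt 0 \<in> SO3 \<and> (\<forall>s. (Rt has_vector_derivative (Rt s ** skew (\<omega> s))) (at s))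
        \<and> (\<forall>s. (tht has_real_derivative v s) (at s))"
    then have R0: "transpose (Rt 0) ** Rt 0 = mat 1" unfolding SO3_def by blast
    show "((\<lambda>s. psi (transpose (Rt s) ** gradR (\<lambda>X. Upot A \<gamma> u X (tht s)) (Rt s)))
           has_vector_derivative
            (DR A u (Rt t) (tht t) *v \<omega> t + v t *\<^sub>R Dtheta A u (Rt t) (tht t))) (at t)"
      using part5_gen[of u Rt \<omega> tht v A \<gamma> t, OF u_unit R0] h by blast
  qed
  show ?thesis using part1 part2 part3 part4 part4b part5 by blast
qed


end
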